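(* Let $\Omega$ be a Cantor group with identity $e$ and let $T$ be a minimal translation of $\Omega$. For $f\in C(\Omega,\mathbb{R})$ let $F(\omega)=(f(T^n(\omega)))_{n\in\mathbb{Z}}\in\ell^\infty(\mathbb{Z})$. Then there exists $f\in C(\Omega,\mathbb{R})$ such that $\mathrm{hull}(F(e))\cong\Omega$ as topological groups.
   Context: A Cantor group is a totally disconnected compact abelian topological group without isolated points. A translation of a topological group $\Omega$ is a map $T(\omega)=\omega\cdot\omega_0$ for some fixed $\omega_0\in\Omega$; it is minimal if $\{T^n(\omega):n\in\mathbb{Z}\}$ is dense in $\Omega$ for every $\omega$. $\sigma$ is the left shift on $\ell^\infty(\mathbb{Z})$ (sup norm), $(\sigma d)_n=d_{n+1}$, and $\mathrm{hull}(d)$ is the closure of $\{\sigma^k d:k\in\mathbb{Z}\}$. In this setting $F(e)$ is limit-periodic (a uniform limit of periodic sequences), and for a limit-periodic $d$, $\mathrm{hull}(d)$ carries a unique topological group structure with identity $d$ such that $k\mapsto\sigma^k(d)$ is a homomorphism; this is the group structure on $\mathrm{hull}(F(e))$. *)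

theory Defs
  imports "HOL-Analysis.Analysis" "HOL-Algebra.Group"
begin

definition totally_disconnected_space :: "'a::topological_space itself \<Rightarrow> bool" where
  "totally_disconnected_space _ \<longleftrightarrow> (\<forall>S::'a set. connected S \<longrightarrow> (\<exists>a. S \<subseteq> {a}))"

definition cantor_group :: "'a::{t2_space, ab_group_add} itself \<Rightarrow> bool" where
  "cantor_group t \<longleftrightarrow>
     continuous_on UNIV (\<lambda>(x::'a, y). x + y) \<and>
     continuous_on UNIV (uminus :: 'a \<Rightarrow> 'a) \<and>
     compact (UNIV :: 'a set) \<and>
     totally_disconnected_space t \<and>
     (\<forall>x::'a. \<not> open {x})"

definition zpow :: "('a \<Rightarrow> 'a) \<Rightarrow> int \<Rightarrow> 'a \<Rightarrow> 'a" where
  "zpow T n = (if 0 \<le> n then T ^^ nat n else (Hilbert_Choice.inv T) ^^ nat (- n))"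

definition is_translation :: "('a::ab_group_add \<Rightarrow> 'a) \<Rightarrow> bool" where
  "is_translation T \<longleftrightarrow> (\<exists>\<omega>0. \<forall>\<omega>. T \<omega> = \<omega> + \<omega>0)"

definition minimal_map :: "('a::topological_space \<Rightarrow> 'a) \<Rightarrow> bool" where
  "minimal_map T \<longleftrightarrow> (\<forall>\<omega>. closure (range (\<lambda>n::int. zpow T n \<omega>)) = UNIV)"

text \<open>The left shift on \<open>\<ell>\<^sup>\<infinity>(\<int>)\<close>, modelled as bounded (automatically continuous)
  functions \<open>int \<Rightarrow>\<^sub>C real\<close> with the sup norm.\<close>
definition shift :: "(int \<Rightarrow>\<^sub>C real) \<Rightarrow> (int \<Rightarrow>\<^sub>C real)" where
  "shift d = Bcontfun (\<lambda>n. apply_bcontfun d (n + 1))"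

definition shift_hull :: "(int \<Rightarrow>\<^sub>C real) \<Rightarrow> (int \<Rightarrow>\<^sub>C real) set" where
  "shift_hull d = closure (range (\<lambda>k::int. zpow shift k d))"

definition orbit_seq :: "('a \<Rightarrow> real) \<Rightarrow> ('a \<Rightarrow> 'a) \<Rightarrow> 'a \<Rightarrow> (int \<Rightarrow>\<^sub>C real)" where
  "orbit_seq f T \<omega> = Bcontfun (\<lambda>n. f (zpow T n \<omega>))"

definition hull_tgroup :: "(int \<Rightarrow>\<^sub>C real) \<Rightarrow> (int \<Rightarrow>\<^sub>C real) monoid \<Rightarrow> bool" where
  "hull_tgroup d G \<longleftrightarrow>
     group G \<and> carrier G = shift_hull d \<and> \<one>\<^bsub>G\<^esub> = d \<and>
     continuous_on (shift_hull d \<times> shift_hull d) (\<lambda>(x, y). x \<otimes>\<^bsub>G\<^esub> y) \<and>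
     continuous_on (shift_hull d) (\<lambda>x. inv\<^bsub>G\<^esub> x) \<and>
     (\<forall>j k::int. zpow shift (j + k) d = zpow shift j d \<otimes>\<^bsub>G\<^esub> zpow shift k d)"

definition tgroup_iso_to :: "(int \<Rightarrow>\<^sub>C real) monoid \<Rightarrow> ((int \<Rightarrow>\<^sub>C real) \<Rightarrow> 'a::{topological_space, ab_group_add}) \<Rightarrow> bool" where
  "tgroup_iso_to G \<phi> \<longleftrightarrow>
     (\<exists>\<psi>. homeomorphism (carrier G) (UNIV :: 'a set) \<phi> \<psi>) \<and>
     (\<forall>x\<in>carrier G. \<forall>y\<in>carrier G. \<phi> (x \<otimes>\<^bsub>G\<^esub> y) = \<phi> x + \<phi> y)"

end

theory Submission
  imports Defs
begin
lemma clopen_nbhd: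
  fixes V :: "'a::t2_space set"
  assumes cpt: "compact (UNIV::'a set)" and td: "totally_disconnected_space TYPE('a)"
    and "open V" "x \<in> V"
  shows "\<exists>C. open C \<and> closed C \<and> x \<in> C \<and> C \<subseteq> V"
proof -
  let ?X = "euclidean :: 'a topology"
  have cs: "compact_space ?X" using cpt by (simp add: compact_space_def)
  have hs: "Hausdorff_space ?X"
    unfolding Hausdorff_space_def using hausdorff by (fastforce simp: disjnt_iff)
  have q: "quasi_component_of ?X x = connected_component_of ?X x"
    by (rule quasi_eq_connected_component_of) (simp add: cs hs)
  have "connectedin ?X (connected_component_of_set ?X x)"
    by (rule connectedin_connected_component_of)
  then have "connected (connected_component_of_set ?X x)" by simp
  then obtain a where "connected_component_of_set ?X x \<subseteq> {a}"
    using td unfolding totally_disconnected_space_def by blast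
  moreover have "x \<in> connected_component_of_set ?X x"
    by (simp add: connected_component_of_refl)
  ultimately have cc: "connected_component_of_set ?X x = {x}" by blast
  have qc: "{x} \<in> quasi_components_of ?X"
  proof -
    have "quasi_component_of_set ?X x \<in> quasi_components_of ?X"
      by (simp add: quasi_component_in_quasi_components_of)
    then show ?thesis using q cc by simp
  qed
  have "compact (- V)" using cpt \<open>open V\<close>
    by (metis closed_Compl compact_Int_closed inf_top_left)
  then have "compactin ?X (- V)" by simp
  moreover have "disjnt {x} (- V)" using \<open>x \<in> V\<close> by simp
  ultimately have "separated_between ?X {x} (- V)"
    using separated_between_quasi_component_compact[OF qc] by blast
  then obtain U W where UW: "open U" "open W" "U \<union> W = UNIV" "disjnt U W" "x \<in> U" "- V \<subseteq> W"
    unfolding separated_between_def by auto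
  have "U = - W" using UW(3,4) by (auto simp: disjnt_iff)
  then have "closed U" using UW(2) by auto
  moreover have "U \<subseteq> V" using UW(4,6) by (auto simp: disjnt_iff)
  ultimately show ?thesis using UW by blast
qed

lemma zpow_zero[simp]: "zpow T 0 x = x"
  by (simp add: zpow_def)

lemma zpow_succ:
  assumes "bij T"
  shows "zpow T (n + 1) x = T (zpow T n x)"
proof (cases "0 \<le> n")
  case True
  then have "nat (n + 1) = Suc (nat n)" by simp
  then show ?thesis using True by (simp add: zpow_def)
next
  case False
  define m where "m = nat (- n - 1)"
  have nm: "nat (- n) = Suc m" using False by (simp add: m_def)
  have "zpow T n x = Hilbert_Choice.inv T ((Hilbert_Choice.inv T ^^ m) x)" using False nm by (simp add: zpow_def)
  then have "T (zpow T n x) = (Hilbert_Choice.inv T ^^ m) x"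
    using assms by (simp add: bij_is_surj surj_f_inv_f)
  moreover have "zpow T (n + 1) x = (Hilbert_Choice.inv T ^^ m) x"
  proof (cases "n + 1 = 0")
    case True
    then show ?thesis by (simp add: m_def)
  next
    case False
    then have "\<not> 0 \<le> n + 1" using \<open>\<not> 0 \<le> n\<close> by simp
    moreover have "nat (- (n + 1)) = m" by (simp add: m_def)
    ultimately show ?thesis by (simp add: zpow_def)
  qed
  ultimately show ?thesis by simp
qed

lemma zpow_pred:
  assumes "bij T"
  shows "T (zpow T (n - 1) x) = zpow T n x"
  using zpow_succ[OF assms, of "n - 1" x] by simp

lemma zpow_add:
  assumes "bij T"
  shows "zpow T (j + k) x = zpow T j (zpow T k x)"
proof (induction j rule: int_induct[where k=0])
  case base
  then show ?case by simp
next
  case (step1 i)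
  then show ?case using zpow_succ[OF assms, of "i + k" x] zpow_succ[OF assms, of i]
    by (simp add: algebra_simps)
next
  case (step2 i)
  have "T (zpow T (i - 1 + k) x) = zpow T (i + k) x"
    using zpow_pred[OF assms, of "i + k" x] by (simp add: algebra_simps)
  also have "\<dots> = T (zpow T (i - 1) (zpow T k x))"
    using step2 zpow_pred[OF assms, of i] by simp
  finally show ?case using assms by (simp add: bij_def inj_eq)
qed

lemma zpow_conj:
  assumes "bij T" "bij S" "\<And>x. h (T x) = S (h x)"
  shows "h (zpow T n x) = zpow S n (h x)"
proof (induction n rule: int_induct[where k=0])
  case base
  then show ?case by simp
next
  case (step1 i)
  then show ?case using zpow_succ[OF assms(1)] zpow_succ[OF assms(2)] assms(3) by simp
next
  case (step2 i)
  have "S (h (zpow T (i - 1) x)) = h (zpow T i x)"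
    using assms(3) zpow_pred[OF assms(1)] by metis
  also have "\<dots> = S (zpow S (i - 1) (h x))"
    using step2 zpow_pred[OF assms(2)] by simp
  finally show ?case using assms(2) by (simp add: bij_def inj_eq)
qed

lemma shift_in:
  fixes d :: "int \<Rightarrow>\<^sub>C real" and c :: int
  shows "(\<lambda>n. apply_bcontfun d (n + c)) \<in> bcontfun"
  by (rule bcontfun_normI[where b="norm d", OF Topological_Spaces.continuous_on_discrete]) (rule norm_bounded)

lemma shift_apply: "apply_bcontfun (shift d) n = apply_bcontfun d (n + 1)"
  unfolding shift_def using shift_in[of d 1] by (simp add: Bcontfun_inverse)

lemma bij_shift: "bij shift"
proof -
  have "inj shift"
  proof (rule injI)
    fix d e assume "shift d = shift e"
    then have e: "apply_bcontfun d (n + 1) = apply_bcontfun e (n + 1)" for n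
      by (metis shift_apply)
    have "apply_bcontfun d n = apply_bcontfun e n" for n
      using e[of "n - 1"] by simp
    then show "d = e" by (rule bcontfun_eqI)
  qed
  moreover have "surj shift"
  proof (rule surjI)
    fix d :: "int \<Rightarrow>\<^sub>C real"
    have m: "(\<lambda>n. apply_bcontfun d (n - 1)) \<in> bcontfun" using shift_in[of d "-1"] by simp
    show "shift (Bcontfun (\<lambda>n. apply_bcontfun d (n - 1))) = d"
      by (rule bcontfun_eqI) (simp add: shift_apply Bcontfun_inverse[OF m])
  qed
  ultimately show ?thesis by (simp add: bij_def)
qed

locale cg =
  fixes T :: "'a::{t2_space,ab_group_add} \<Rightarrow> 'a" and w0 :: 'a
  assumes add_cont: "continuous_on UNIV (\<lambda>(x::'a, y). x + y)"
    and neg_cont: "continuous_on UNIV (uminus :: 'a \<Rightarrow> 'a)"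
    and cpt: "compact (UNIV :: 'a set)"
    and td: "totally_disconnected_space TYPE('a)"
    and noiso: "\<forall>x::'a. \<not> open {x}"
    and Tdef: "\<And>x. T x = x + w0"
    and mini: "minimal_map T"
begin

lemma bijT: "bij T"
proof -
  have "inj T" by (rule injI) (simp add: Tdef)
  moreover have "surj T"
  proof (rule surjI)
    fix y show "T (y - w0) = y" by (simp add: Tdef)
  qed
  ultimately show ?thesis by (simp add: bij_def)
qed

definition z :: "int \<Rightarrow> 'a" where "z n = zpow T n 0"

lemma zpow_T: "zpow T n x = x + z n"
proof (induction n rule: int_induct[where k=0])
  case base
  then show ?case by (simp add: z_def)
next
  case (step1 i)
  have "zpow T (i + 1) x = zpow T i x + w0" using zpow_succ[OF bijT] Tdef by simp
  moreover have "z (i + 1) = z i + w0" using zpow_succ[OF bijT] Tdef by (simp add: z_def)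
  ultimately show ?case using step1 by (simp add: add.assoc)
next
  case (step2 i)
  have A: "zpow T (i - 1) x + w0 = x + z i"
    using zpow_pred[OF bijT, of i x] step2 Tdef[of "zpow T (i - 1) x"] by simp
  have B: "z (i - 1) + w0 = z i"
    using zpow_pred[OF bijT, of i 0] Tdef[of "zpow T (i - 1) 0"] by (simp add: z_def)
  have "zpow T (i - 1) x + w0 = (x + z (i - 1)) + w0" using A B by (simp add: add.assoc)
  then show ?case by simp
qed

lemma z_add: "z (j + k) = z j + z k"
proof -
  have "z (j + k) = zpow T j (zpow T k 0)" using zpow_add[OF bijT, of j k 0] by (simp add: z_def)
  also have "\<dots> = zpow T k 0 + z j" by (rule zpow_T)
  finally show ?thesis by (simp add: z_def add.commute)
qed

lemma z_0[simp]: "z 0 = 0"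
  by (simp add: z_def)

lemma z_uminus: "z (- n) = - z n"
  using z_add[of n "- n"] by (simp add: eq_neg_iff_add_eq_0 add.commute)

lemma dense_z: "closure (range z) = UNIV"
  using mini unfolding minimal_map_def z_def by blast

lemma tr_cont: "continuous_on UNIV (\<lambda>x::'a. x + a)"
proof -
  have "continuous_on UNIV (\<lambda>x. (\<lambda>(x::'a, y). x + y) (x, a))"
    by (rule continuous_on_compose2[OF add_cont]) (auto intro!: continuous_on_Pair continuous_on_id continuous_on_const)
  then show ?thesis by simp
qed

lemma tr_cont': "continuous_on UNIV (\<lambda>x::'a. a + x)"
  using tr_cont[of a] by (simp add: add.commute)

lemma open_tr: "open (S::'a set) \<Longrightarrow> open ((\<lambda>x. a + x) ` S)"
proof -
  assume "open S"
  have "(\<lambda>x. a + x) ` S = (\<lambda>x. x + (- a)) -` S"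
  proof
    show "(\<lambda>x. a + x) ` S \<subseteq> (\<lambda>x. x + (- a)) -` S" by auto
    show "(\<lambda>x. x + (- a)) -` S \<subseteq> (\<lambda>x. a + x) ` S"
    proof
      fix y assume "y \<in> (\<lambda>x. x + (- a)) -` S"
      then have "y + - a \<in> S" by simp
      moreover have "y = a + (y + - a)" by simp
      ultimately show "y \<in> (\<lambda>x. a + x) ` S" by (rule rev_image_eqI)
    qed
  qed
  then show ?thesis using open_vimage[OF \<open>open S\<close> tr_cont[of "- a"]] by simp
qed

lemma closed_tr: "closed (S::'a set) \<Longrightarrow> closed ((\<lambda>x. a + x) ` S)"
proof -
  assume "closed S"
  have "(\<lambda>x. a + x) ` S = (\<lambda>x. x + (- a)) -` S"
  proof
    show "(\<lambda>x. a + x) ` S \<subseteq> (\<lambda>x. x + (- a)) -` S" by auto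
    show "(\<lambda>x. x + (- a)) -` S \<subseteq> (\<lambda>x. a + x) ` S"
    proof
      fix y assume "y \<in> (\<lambda>x. x + (- a)) -` S"
      then have "y + - a \<in> S" by simp
      moreover have "y = a + (y + - a)" by simp
      ultimately show "y \<in> (\<lambda>x. a + x) ` S" by (rule rev_image_eqI)
    qed
  qed
  then show ?thesis using closed_vimage[OF \<open>closed S\<close> tr_cont[of "- a"]] by simp
qed

lemma neg_tr_cont: "continuous_on UNIV (\<lambda>p::'a\<times>'a. - fst p + snd p)"
proof -
  have "continuous_on UNIV (\<lambda>p::'a\<times>'a. (- fst p, snd p))"
    by (intro continuous_on_Pair continuous_on_snd continuous_on_compose2[OF neg_cont continuous_on_fst]) auto
  then have "continuous_on UNIV (\<lambda>p::'a\<times>'a. (\<lambda>(x::'a, y). x + y) (- fst p, snd p))"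
    by (rule continuous_on_compose2[OF add_cont]) auto
  then show ?thesis by simp
qed

lemma add_cont': "continuous_on UNIV (\<lambda>p::'a\<times>'a. fst p + snd p)"
  using add_cont by (simp add: case_prod_beta)

lemma closure_add:
  assumes "\<forall>x\<in>S. \<forall>y\<in>S. x + y \<in> S" "x \<in> closure S" "y \<in> closure S"
  shows "x + y \<in> closure (S::'a set)"
proof -
  have "(\<lambda>p. fst p + snd p) ` closure (S \<times> S) \<subseteq> closure S"
    by (rule image_closure_subset) (use assms(1) in \<open>auto intro: continuous_on_subset[OF add_cont'] closure_subset[THEN subsetD]\<close>)
  moreover have "(x, y) \<in> closure (S \<times> S)" using assms(2,3) by (simp add: closure_Times)
  ultimately have "fst (x, y) + snd (x, y) \<in> closure S" by blast
  then show ?thesis by simp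
qed

lemma closure_neg:
  assumes "\<forall>x\<in>S. - x \<in> S" "x \<in> closure S"
  shows "- x \<in> closure (S::'a set)"
proof -
  have "uminus ` closure S \<subseteq> closure S"
    by (rule image_closure_subset) (use assms(1) in \<open>auto intro: continuous_on_subset[OF neg_cont] closure_subset[THEN subsetD]\<close>)
  then show ?thesis using assms(2) by auto
qed

lemma closure_tr: "closure ((+) a ` S) \<subseteq> (+) a ` closure (S::'a set)"
  by (rule closure_minimal) (auto intro: closed_tr closure_subset[THEN subsetD])

definition K :: "nat \<Rightarrow> 'a set" where "K n = closure (range (\<lambda>j. z (int n * j)))"

lemma K_closed: "closed (K n)" by (simp add: K_def)

lemma K_mem: "z (int n * j) \<in> K n"
  unfolding K_def by (rule closure_subset[THEN subsetD]) auto

lemma K_0: "0 \<in> K n" using K_mem[of n 0] by simp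

lemma K_add: "x \<in> K n \<Longrightarrow> y \<in> K n \<Longrightarrow> x + y \<in> K n"
  unfolding K_def
  by (rule closure_add) (auto simp: z_add[symmetric] distrib_left[symmetric])

lemma K_neg: "x \<in> K n \<Longrightarrow> - x \<in> K n"
  unfolding K_def
  by (rule closure_neg) (auto simp: z_uminus[symmetric] intro!: range_eqI[where x="- j" for j])

lemma K_diff: "x \<in> K n \<Longrightarrow> y \<in> K n \<Longrightarrow> x - y \<in> K n"
  using K_add K_neg by (metis diff_conv_add_uminus)

lemma K_cover:
  assumes "n \<ge> 1"
  shows "UNIV = (\<Union>r\<in>{0..<int n}. (+) (z r) ` K n)"
proof -
  let ?S = "range (\<lambda>j. z (int n * j))"
  have "range z \<subseteq> (\<Union>r\<in>{0..<int n}. (+) (z r) ` ?S)"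
  proof
    fix y assume "y \<in> range z"
    then obtain k where k: "y = z k" by auto
    have e: "k mod int n + int n * (k div int n) = k" by simp
    have "z k = z (k mod int n + int n * (k div int n))" using e by simp
    also have "\<dots> = z (k mod int n) + z (int n * (k div int n))" by (rule z_add)
    finally have zk: "z k = z (k mod int n) + z (int n * (k div int n))" .
    have "k mod int n \<in> {0..<int n}" using assms by simp
    then show "y \<in> (\<Union>r\<in>{0..<int n}. (+) (z r) ` ?S)"
    proof (rule UN_I)
      show "y \<in> (+) (z (k mod int n)) ` ?S"
        by (rule rev_image_eqI[of "z (int n * (k div int n))"]) (auto simp: k zk)
    qed
  qed
  then have "closure (range z) \<subseteq> closure (\<Union>r\<in>{0..<int n}. (+) (z r) ` ?S)"
    by (rule closure_mono)
  then have "UNIV \<subseteq> closure (\<Union>r\<in>{0..<int n}. (+) (z r) ` ?S)"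
    by (simp only: dense_z)
  also have "\<dots> \<subseteq> (\<Union>r\<in>{0..<int n}. (+) (z r) ` K n)"
  proof (rule closure_minimal)
    show "(\<Union>r\<in>{0..<int n}. (+) (z r) ` ?S) \<subseteq> (\<Union>r\<in>{0..<int n}. (+) (z r) ` K n)"
      unfolding K_def by (intro UN_mono image_mono closure_subset) auto
    show "closed (\<Union>r\<in>{0..<int n}. (+) (z r) ` K n)"
      by (intro closed_UN) (auto intro: closed_tr K_closed)
  qed
  finally show ?thesis by (intro equalityI subset_UNIV)
qed

lemma K_open:
  assumes "n \<ge> 1"
  shows "open (K n)"
proof -
  let ?R = "{r\<in>{0..<int n}. z r \<notin> K n}"
  have eq: "K n = - (\<Union>r\<in>?R. (+) (z r) ` K n)"
  proof
    show "K n \<subseteq> - (\<Union>r\<in>?R. (+) (z r) ` K n)"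
    proof
      fix x assume x: "x \<in> K n"
      show "x \<in> - (\<Union>r\<in>?R. (+) (z r) ` K n)"
      proof
        assume "x \<in> (\<Union>r\<in>?R. (+) (z r) ` K n)"
        then obtain r k where "r \<in> ?R" "k \<in> K n" "x = z r + k" by auto
        then have "z r = x - k" by simp
        then have "z r \<in> K n" using K_diff x \<open>k \<in> K n\<close> by simp
        then show False using \<open>r \<in> ?R\<close> by simp
      qed
    qed
    show "- (\<Union>r\<in>?R. (+) (z r) ` K n) \<subseteq> K n"
    proof
      fix x assume x: "x \<in> - (\<Union>r\<in>?R. (+) (z r) ` K n)"
      have "x \<in> (\<Union>r\<in>{0..<int n}. (+) (z r) ` K n)"
        by (subst K_cover[OF assms, symmetric]) simp
      then obtain r where r: "r \<in> {0..<int n}" "x \<in> (+) (z r) ` K n"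
        by (rule UN_E)
      then obtain k where k: "k \<in> K n" "x = z r + k" by auto
      show "x \<in> K n"
      proof (cases "z r \<in> K n")
        case True then show ?thesis using k K_add by simp
      next
        case False
        then have "r \<in> ?R" using r(1) by simp
        then have "x \<in> (\<Union>r\<in>?R. (+) (z r) ` K n)" using r(2) by (rule UN_I)
        then have False using x by (simp only: Compl_iff not_True_eq_False)
        then show ?thesis ..
      qed
    qed
  qed
  have fin: "finite ?R" by (rule finite_subset[of _ "{0..<int n}"]) auto
  have "\<forall>r\<in>?R. closed ((+) (z r) ` K n)" using closed_tr K_closed by blast
  then have "closed (\<Union>r\<in>?R. (+) (z r) ` K n)" by (rule closed_UN[OF fin])
  then have "open (- (\<Union>r\<in>?R. (+) (z r) ` K n))" by (rule open_Compl)
  then show ?thesis by (simp only: eq[symmetric])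
qed

lemma subgroup_in_clopen:
  assumes "open (C::'a set)" "closed C" "0 \<in> C"
  shows "\<exists>H. open H \<and> 0 \<in> H \<and> H \<subseteq> C \<and> (\<forall>x\<in>H. \<forall>y\<in>H. x + y \<in> H) \<and> (\<forall>x\<in>H. - x \<in> H)"
proof -
  define W where "W = (\<lambda>p::'a\<times>'a. fst p + snd p) -` C \<inter> (\<lambda>p. - fst p + snd p) -` C"
  have "open W" unfolding W_def
    by (rule open_Int; rule open_vimage[OF assms(1)]) (rule add_cont', rule neg_tr_cont)
  have "compact C" using compact_Int_closed[OF cpt assms(2)] by simp
  moreover have "{0} \<times> C \<subseteq> W" by (auto simp: W_def)
  ultimately have "\<exists>X0. 0 \<in> X0 \<and> open X0 \<and> X0 \<times> C \<subseteq> W"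
    by (rule Elementary_Topology.tube_lemma[OF _ \<open>open W\<close>])
  then obtain X0 where X0: "0 \<in> X0" "open X0" "X0 \<times> C \<subseteq> W" by blast
  define H where "H = {g. \<forall>c\<in>C. g + c \<in> C \<and> - g + c \<in> C}"
  have X0H: "X0 \<subseteq> H" using X0(3) by (auto simp: H_def W_def)
  have Hadd: "x + y \<in> H" if "x \<in> H" "y \<in> H" for x y
  proof -
    from that have hx: "\<forall>c\<in>C. x + c \<in> C \<and> - x + c \<in> C"
      and hy: "\<forall>c\<in>C. y + c \<in> C \<and> - y + c \<in> C" by (auto simp: H_def)
    show ?thesis unfolding H_def
    proof (intro CollectI ballI conjI)
      fix c assume c: "c \<in> C"
      have "x + (y + c) \<in> C" using hx hy c by blast
      then show "x + y + c \<in> C" by (simp add: add.assoc)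
      have "- y + (- x + c) \<in> C" using hx hy c by blast
      then show "- (x + y) + c \<in> C" by (simp add: algebra_simps)
    qed
  qed
  have Hneg: "- x \<in> H" if "x \<in> H" for x
  proof -
    from that have hx: "\<forall>c\<in>C. x + c \<in> C \<and> - x + c \<in> C" by (auto simp: H_def)
    show ?thesis unfolding H_def
    proof (intro CollectI ballI conjI)
      fix c assume c: "c \<in> C"
      show "- x + c \<in> C" using hx c by blast
      show "- (- x) + c \<in> C" using hx c by simp
    qed
  qed
  have "H = (\<Union>h\<in>H. (+) h ` X0)"
  proof
    show "H \<subseteq> (\<Union>h\<in>H. (+) h ` X0)"
    proof
      fix h assume "h \<in> H"
      moreover have "h \<in> (+) h ` X0" using X0(1) by (rule rev_image_eqI) simp
      ultimately show "h \<in> (\<Union>h\<in>H. (+) h ` X0)" by blast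
    qed
    show "(\<Union>h\<in>H. (+) h ` X0) \<subseteq> H"
      using X0H Hadd by blast
  qed
  moreover have "open (\<Union>h\<in>H. (+) h ` X0)" using open_tr[OF X0(2)] by blast
  ultimately have "open H" by simp
  moreover have "0 \<in> H" using assms(3) by (simp add: H_def)
  moreover have "H \<subseteq> C"
  proof
    fix g assume "g \<in> H"
    then have "g + 0 \<in> C" using assms(3) unfolding H_def by blast
    then show "g \<in> C" by simp
  qed
  ultimately show ?thesis using Hadd Hneg by blast
qed

lemma open_subgroup_closed:
  assumes "open H" "\<forall>x\<in>H. \<forall>y\<in>H. x + y \<in> H" "\<forall>x\<in>H. - x \<in> H" "0 \<in> H"
  shows "closed (H::'a set)"
proof -
  have "- H = (\<Union>x\<in>-H. (+) x ` H)"
  proof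
    show "- H \<subseteq> (\<Union>x\<in>-H. (+) x ` H)"
    proof
      fix y assume "y \<in> - H"
      show "y \<in> (\<Union>x\<in>-H. (+) x ` H)"
      proof (rule UN_I[of y])
        show "y \<in> - H" by fact
        show "y \<in> (+) y ` H" using assms(4) by (rule rev_image_eqI) simp
      qed
    qed
    show "(\<Union>x\<in>-H. (+) x ` H) \<subseteq> - H"
    proof clarify
      fix x h assume "x \<notin> H" "h \<in> H" "x + h \<in> H"
      then have "x + h + - h \<in> H" using assms by blast
      then show False using \<open>x \<notin> H\<close> by simp
    qed
  qed
  moreover have "open (\<Union>x\<in>-H. (+) x ` H)" using open_tr[OF assms(1)] by blast
  ultimately show ?thesis by (metis open_closed double_complement closed_open)
qed

lemma small_K:
  assumes "open V" "0 \<in> V"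
  shows "\<exists>n\<ge>1. K n \<subseteq> V"
proof -
  obtain C where C: "open C" "closed C" "0 \<in> C" "C \<subseteq> V"
    using clopen_nbhd[OF cpt td assms] by blast
  obtain H where H: "open H" "0 \<in> H" "H \<subseteq> C" "\<forall>x\<in>H. \<forall>y\<in>H. x + y \<in> H" "\<forall>x\<in>H. - x \<in> H"
    using subgroup_in_clopen[OF C(1-3)] by blast
  have Hc: "closed H" by (rule open_subgroup_closed[OF H(1) H(4) H(5) H(2)])
  have "H \<noteq> {0}"
  proof
    assume "H = {0}"
    then show False using noiso H(1) by simp
  qed
  then have "H - {0} \<noteq> {}" using H(2) by blast
  moreover have "open (H - {0})" using H(1) by (intro open_Diff) auto
  ultimately have "(H - {0}) \<inter> range z \<noteq> {}"
    using open_Int_closure_eq_empty[of "H - {0}" "range z"] dense_z by simp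
  then obtain k where k: "z k \<in> H" "z k \<noteq> 0" by auto
  then have "k \<noteq> 0" by auto
  have zkj: "z (k * j) \<in> H" for j
  proof (induction j rule: int_induct[where k=0])
    case base then show ?case using H(2) by simp
  next
    case (step1 i)
    then show ?case using H(4) k(1) z_add[of "k * i" k] by (simp add: distrib_left)
  next
    case (step2 i)
    have eq: "z (k * (i - 1)) = z (k * i) + z (- k)"
      using z_add[of "k * i" "- k"] by (simp add: right_diff_distrib)
    have "z (- k) \<in> H" using H(5) k(1) z_uminus by simp
    then show ?case unfolding eq using H(4) step2 by blast
  qed
  define n where "n = nat \<bar>k\<bar>"
  have "n \<ge> 1" using \<open>k \<noteq> 0\<close> by (simp add: n_def)
  have "range (\<lambda>j. z (int n * j)) \<subseteq> H"
  proof clarify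
    fix j
    have "int n = k * sgn k" by (simp add: n_def abs_sgn[symmetric])
    then have "int n * j = k * (sgn k * j)" by (simp only: mult.assoc)
    then show "z (int n * j) \<in> H" using zkj[of "sgn k * j"] by (simp only:)
  qed
  then have "K n \<subseteq> H" unfolding K_def using Hc by (rule closure_minimal)
  then show ?thesis using \<open>n \<ge> 1\<close> H(3) C(4) by blast
qed

definition chi :: "nat \<Rightarrow> 'a \<Rightarrow> real" where "chi m x = (if x \<in> K (Suc m) then 1 else 0)"

definition f :: "'a \<Rightarrow> real" where "f x = (\<Sum>m. (1/3) ^ m * chi m x)"

lemma geo: "summable (\<lambda>m. (1/3::real) ^ m)"
  by (rule summable_geometric) simp

lemma geo_sum: "(\<Sum>m. (1/3::real) ^ m) = 3/2"
proof -
  have "(\<lambda>m. (1/3::real) ^ m) sums (1 / (1 - 1/3))" by (rule geometric_sums) simp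
  then show ?thesis by (simp add: sums_iff)
qed

lemma chi_bound: "0 \<le> chi m x" "chi m x \<le> 1"
  by (auto simp: chi_def)

lemma summable_f: "summable (\<lambda>m. (1/3::real) ^ m * chi m x)"
proof (rule summable_comparison_test'[OF geo])
  fix m :: nat
  show "norm ((1/3::real) ^ m * chi m x) \<le> (1/3) ^ m"
    using chi_bound[of m x] by (simp add: abs_mult)
qed

lemma f_bound: "\<bar>f x\<bar> \<le> 3/2"
proof -
  have "norm (f x) \<le> (\<Sum>m. (1/3::real) ^ m)"
    unfolding f_def
  proof (rule norm_suminf_le[OF _ geo])
    fix m :: nat
    show "norm ((1/3::real) ^ m * chi m x) \<le> (1/3) ^ m"
      using chi_bound[of m x] by (simp add: abs_mult)
  qed
  then show ?thesis by (simp add: geo_sum)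
qed

lemma tail_sum: "(\<Sum>m. (if m < N then 0 else (1/3::real) ^ m)) = (1/3) ^ N * (3/2)"
proof -
  let ?c = "\<lambda>m. (if m < N then 0 else (1/3::real) ^ m)"
  have "(\<lambda>i. (1/3::real) ^ N * (1/3) ^ i) sums ((1/3) ^ N * (1 / (1 - 1/3)))"
    by (rule sums_mult) (rule geometric_sums, simp)
  moreover have "(\<lambda>i. ?c (i + N)) = (\<lambda>i. (1/3::real) ^ N * (1/3) ^ i)"
    by (simp add: power_add mult.commute)
  moreover have "sum ?c {..<N} = 0" by simp
  ultimately have "(\<lambda>i. ?c (i + N)) sums ((1/3) ^ N * (3/2) - sum ?c {..<N})" by simp
  then have "?c sums ((1/3) ^ N * (3/2))" by (rule sums_iff_shift'[THEN iffD1])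
  then show ?thesis by (simp add: sums_iff)
qed

definition Wn :: "nat \<Rightarrow> 'a set" where "Wn N = (\<Inter>m<N. K (Suc m))"

lemma Wn_open: "open (Wn N)"
  unfolding Wn_def by (intro open_INT) (auto intro: K_open)

lemma Wn_0: "0 \<in> Wn N"
  unfolding Wn_def using K_0 by blast

lemma chi_shift:
  assumes "u \<in> Wn N" "m < N"
  shows "chi m (x + u) = chi m x"
proof -
  have u: "u \<in> K (Suc m)" using assms unfolding Wn_def by blast
  have "x + u \<in> K (Suc m) \<longleftrightarrow> x \<in> K (Suc m)"
  proof
    assume "x + u \<in> K (Suc m)"
    then have "x + u - u \<in> K (Suc m)" using K_diff u by blast
    then show "x \<in> K (Suc m)" by simp
  next
    assume "x \<in> K (Suc m)" then show "x + u \<in> K (Suc m)" using K_add u by blast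
  qed
  then show ?thesis by (simp add: chi_def)
qed

lemma f_diff_bound:
  assumes "u \<in> Wn N"
  shows "\<bar>f (x + u) - f x\<bar> \<le> (1/3) ^ N * (3/2)"
proof -
  have "f (x + u) - f x = (\<Sum>m. (1/3::real) ^ m * chi m (x + u) - (1/3) ^ m * chi m x)"
    unfolding f_def by (rule suminf_diff[OF summable_f summable_f])
  also have "norm \<dots> \<le> (\<Sum>m. (if m < N then 0 else (1/3::real) ^ m))"
  proof (rule norm_suminf_le)
    fix m :: nat
    show "norm ((1/3::real) ^ m * chi m (x + u) - (1/3) ^ m * chi m x) \<le> (if m < N then 0 else (1/3) ^ m)"
    proof (cases "m < N")
      case True then show ?thesis using chi_shift[OF assms True, of x] by simp
    next
      case False
      have "\<bar>chi m (x + u) - chi m x\<bar> \<le> 1" using chi_bound[of m x] chi_bound[of m "x + u"] by linarith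
      then have "\<bar>(1/3::real) ^ m * (chi m (x + u) - chi m x)\<bar> \<le> (1/3) ^ m"
        by (simp add: abs_mult mult_left_le)
      then show ?thesis using False by (simp add: right_diff_distrib)
    qed
  next
    show "summable (\<lambda>m. (if m < N then 0 else (1/3::real) ^ m))"
      by (rule summable_comparison_test'[OF geo]) simp
  qed
  finally show ?thesis by (simp add: tail_sum)
qed

lemma uc:
  assumes "e > 0"
  shows "\<exists>U. open U \<and> 0 \<in> U \<and> (\<forall>u\<in>U. \<forall>x. \<bar>f (x + u) - f x\<bar> \<le> e)"
proof -
  obtain N where N: "(1/3::real) ^ N < e / 2" using real_arch_pow_inv[of "e/2" "1/3"] assms by auto
  have "(1/3::real) ^ N * (3/2) \<le> e" using N assms by linarith
  then show ?thesis using f_diff_bound Wn_open Wn_0 by (meson order_trans)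
qed

lemma cont_from_uc:
  fixes g :: "'a \<Rightarrow> 'b::metric_space"
  assumes "\<And>e. e > 0 \<Longrightarrow> \<exists>U. open U \<and> 0 \<in> U \<and> (\<forall>u\<in>U. \<forall>x. dist (g (x + u)) (g x) \<le> e)"
  shows "continuous_on UNIV g"
  unfolding continuous_on_topological
proof (intro ballI allI impI)
  fix x B assume "open B" "g x \<in> B"
  then obtain e where e: "e > 0" "ball (g x) e \<subseteq> B" by (meson openE)
  obtain U where U: "open U" "0 \<in> U" "\<forall>u\<in>U. \<forall>x. dist (g (x + u)) (g x) \<le> e / 2"
    using assms[of "e/2"] e(1) by auto
  define A where "A = (\<lambda>y. y + (- x)) -` U"
  have "open A" unfolding A_def by (rule open_vimage[OF U(1) tr_cont])
  moreover have "x \<in> A" using U(2) by (simp add: A_def)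
  moreover have "g y \<in> B" if "y \<in> A" for y
  proof -
    have "y - x \<in> U" using that by (simp add: A_def)
    then have "dist (g (x + (y - x))) (g x) \<le> e / 2" using U(3) by blast
    then have "dist (g y) (g x) < e" using e(1) by simp
    then show ?thesis using e(2) by (auto simp: dist_commute)
  qed
  ultimately show "\<exists>A. open A \<and> x \<in> A \<and> (\<forall>y\<in>UNIV. y \<in> A \<longrightarrow> g y \<in> B)" by blast
qed

lemma f_cont: "continuous_on UNIV f"
  by (rule cont_from_uc) (use uc in \<open>simp add: dist_real_def\<close>)

definition F :: "'a \<Rightarrow> (int \<Rightarrow>\<^sub>C real)" where "F x = orbit_seq f T x"

lemma F_in: "(\<lambda>n. f (zpow T n x)) \<in> bcontfun"
  by (rule bcontfun_normI[where b="3/2", OF Topological_Spaces.continuous_on_discrete]) (simp only: real_norm_def f_bound)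

lemma F_apply: "apply_bcontfun (F x) n = f (x + z n)"
  unfolding F_def orbit_seq_def using F_in[of x] by (simp add: Bcontfun_inverse zpow_T)

lemma F_cont: "continuous_on UNIV F"
proof (rule cont_from_uc)
  fix e :: real assume "e > 0"
  then obtain U where U: "open U" "0 \<in> U" "\<forall>u\<in>U. \<forall>x. \<bar>f (x + u) - f x\<bar> \<le> e"
    using uc by blast
  have "dist (F (x + u)) (F x) \<le> e" if "u \<in> U" for x u
  proof (rule dist_bound)
    fix n
    have "\<bar>f ((x + z n) + u) - f (x + z n)\<bar> \<le> e" using U(3) that by blast
    then show "dist (apply_bcontfun (F (x + u)) n) (apply_bcontfun (F x) n) \<le> e"
      by (simp add: F_apply dist_real_def algebra_simps)
  qed
  then show "\<exists>U. open U \<and> 0 \<in> U \<and> (\<forall>u\<in>U. \<forall>x. dist (F (x + u)) (F x) \<le> e)"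
    using U(1,2) by blast
qed

lemma f_0: "f 0 = (\<Sum>m. (1/3::real) ^ m)"
  unfolding f_def chi_def using K_0 by simp

lemma f_eq_0:
  assumes "f p = f 0"
  shows "p = 0"
proof -
  have "(\<Sum>m. (1/3::real) ^ m) - (\<Sum>m. (1/3) ^ m * chi m p) = (\<Sum>m. (1/3::real) ^ m - (1/3) ^ m * chi m p)"
    by (rule suminf_diff[OF geo summable_f])
  moreover have "f 0 - f p = (\<Sum>m. (1/3::real) ^ m) - (\<Sum>m. (1/3) ^ m * chi m p)"
    using f_0 by (simp add: f_def[of p])
  ultimately have "(\<Sum>m. (1/3::real) ^ m - (1/3) ^ m * chi m p) = f 0 - f p" by simp
  then have "(\<Sum>m. (1/3::real) ^ m - (1/3) ^ m * chi m p) = 0" using assms by simp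
  moreover have "summable (\<lambda>m. (1/3::real) ^ m - (1/3) ^ m * chi m p)"
    by (rule summable_diff[OF geo summable_f])
  moreover have "0 \<le> (1/3::real) ^ m - (1/3) ^ m * chi m p" for m
    using chi_bound[of m p] by (simp add: mult_left_le)
  ultimately have "\<forall>m. (1/3::real) ^ m - (1/3) ^ m * chi m p = 0"
    using suminf_eq_zero_iff by blast
  then have "chi m p = 1" for m by (metis mult_cancel_left1 eq_iff_diff_eq_0 power_not_zero zero_neq_numeral divide_eq_0_iff one_neq_zero)
  then have pK: "p \<in> K (Suc m)" for m by (metis chi_def zero_neq_one)
  show ?thesis
  proof (rule ccontr)
    assume "p \<noteq> 0"
    have "open (- {p})" by auto
    moreover have "0 \<in> - {p}" using \<open>p \<noteq> 0\<close> by auto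
    ultimately obtain n where n: "n \<ge> 1" "K n \<subseteq> - {p}" using small_K by blast
    have "p \<in> K (Suc (n - 1))" by (rule pK)
    then have "p \<in> K n" using n(1) by simp
    then show False using n(2) by blast
  qed
qed

lemma F_inj: "inj F"
proof (rule injI)
  fix x y assume "F x = F y"
  then have e: "f (x + z n) = f (y + z n)" for n
    using F_apply by metis
  have "closed {w. f (x + w) = f (y + w)}"
    by (rule closed_Collect_eq; rule continuous_on_compose2[OF f_cont tr_cont']) auto
  moreover have "range z \<subseteq> {w. f (x + w) = f (y + w)}" using e by auto
  ultimately have "closure (range z) \<subseteq> {w. f (x + w) = f (y + w)}" by (rule closure_minimal[rotated])
  then have "f (x + (- x)) = f (y + (- x))" using dense_z by blast
  then have "f (y - x) = f 0" by simp
  then have "y - x = 0" by (rule f_eq_0)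
  then show "x = y" by simp
qed

lemma z_1: "z 1 = w0"
  using zpow_succ[OF bijT, of 0 0] by (simp add: z_def Tdef)

lemma shift_F: "F (T x) = shift (F x)"
proof (rule bcontfun_eqI)
  fix n
  have "z (n + 1) = z n + w0" using z_add[of n 1] z_1 by simp
  then show "apply_bcontfun (F (T x)) n = apply_bcontfun (shift (F x)) n"
    by (simp add: shift_apply F_apply Tdef algebra_simps)
qed

lemma orb: "zpow shift k (F 0) = F (z k)"
  using zpow_conj[OF bijT bij_shift, of F, OF shift_F, of k 0] by (simp add: z_def)

lemma hull_eq: "shift_hull (F 0) = range F"
proof -
  have r: "range (\<lambda>k. zpow shift k (F 0)) = F ` range z" using orb by auto
  have "compact (range F)" by (rule compact_continuous_image[OF F_cont cpt])
  then have cl: "closed (range F)" by (rule compact_imp_closed)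
  have "closure (F ` range z) \<subseteq> range F" by (rule closure_minimal[OF _ cl]) auto
  moreover have "F ` closure (range z) \<subseteq> closure (F ` range z)"
    by (rule continuous_image_closure_subset[OF F_cont]) simp
  ultimately show ?thesis unfolding shift_hull_def r dense_z by blast
qed

lemma main:
  shows "\<exists>f :: 'a \<Rightarrow> real. continuous_on UNIV f \<and>
           (\<exists>G. hull_tgroup (orbit_seq f T 0) G) \<and>
           (\<forall>G. hull_tgroup (orbit_seq f T 0) G \<longrightarrow>
                (\<exists>\<phi> :: (int \<Rightarrow>\<^sub>C real) \<Rightarrow> 'a. tgroup_iso_to G \<phi>))"
proof -
  have d: "orbit_seq f T 0 = F 0" by (simp add: F_def)
  obtain g where hom: "homeomorphism UNIV (range F) F g"
    using homeomorphism_compact[OF cpt F_cont refl] F_inj by blast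
  have gF: "g (F x) = x" for x using hom by (simp add: homeomorphism_def)
  have Fg: "y \<in> range F \<Longrightarrow> F (g y) = y" for y using hom unfolding homeomorphism_def by blast
  have g_cont: "continuous_on (range F) g" using hom unfolding homeomorphism_def by blast
  let ?S = "range F"
  have c1: "continuous_on (?S \<times> ?S) (\<lambda>p. (g (fst p), g (snd p)))"
  proof (rule continuous_on_Pair)
    show "continuous_on (?S \<times> ?S) (\<lambda>p. g (fst p))"
      by (rule continuous_on_compose2[OF g_cont continuous_on_fst[OF continuous_on_id]]) auto
    show "continuous_on (?S \<times> ?S) (\<lambda>p. g (snd p))"
      by (rule continuous_on_compose2[OF g_cont continuous_on_snd[OF continuous_on_id]]) auto
  qed
  have c2: "continuous_on (?S \<times> ?S) (\<lambda>p. g (fst p) + g (snd p))"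
    using continuous_on_compose2[OF add_cont' c1] by simp
  have c3: "continuous_on (?S \<times> ?S) (\<lambda>p. F (g (fst p) + g (snd p)))"
    using continuous_on_compose2[OF F_cont c2] by simp
  define G :: "(int \<Rightarrow>\<^sub>C real) monoid"
    where "G = \<lparr>carrier = range F, mult = (\<lambda>a b. F (g a + g b)), one = F 0\<rparr>"
  have grp: "group G"
  proof (rule groupI)
    show "x \<otimes>\<^bsub>G\<^esub> y \<in> carrier G" if "x \<in> carrier G" "y \<in> carrier G" for x y
      by (simp add: G_def)
    show "\<one>\<^bsub>G\<^esub> \<in> carrier G" by (simp add: G_def)
    show "x \<otimes>\<^bsub>G\<^esub> y \<otimes>\<^bsub>G\<^esub> w = x \<otimes>\<^bsub>G\<^esub> (y \<otimes>\<^bsub>G\<^esub> w)"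
      if "x \<in> carrier G" "y \<in> carrier G" "w \<in> carrier G" for x y w
      by (simp add: G_def gF add.assoc)
    show "\<one>\<^bsub>G\<^esub> \<otimes>\<^bsub>G\<^esub> x = x" if "x \<in> carrier G" for x
      using that by (simp add: G_def gF Fg)
    show "\<exists>y\<in>carrier G. y \<otimes>\<^bsub>G\<^esub> x = \<one>\<^bsub>G\<^esub>" if "x \<in> carrier G" for x
    proof (rule bexI[of _ "F (- g x)"])
      show "F (- g x) \<otimes>\<^bsub>G\<^esub> x = \<one>\<^bsub>G\<^esub>" by (simp add: G_def gF)
      show "F (- g x) \<in> carrier G" by (simp add: G_def)
    qed
  qed
  have invG: "inv\<^bsub>G\<^esub> x = F (- g x)" if "x \<in> range F" for x
    by (rule group.inv_equality[OF grp]) (use that in \<open>simp_all add: G_def gF\<close>)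
  have inv_cont: "continuous_on ?S (\<lambda>x. F (- g x))"
  proof -
    have "continuous_on ?S (\<lambda>x. - g x)"
      by (rule continuous_on_compose2[OF neg_cont g_cont]) simp
    then show ?thesis by (rule continuous_on_compose2[OF F_cont]) simp
  qed
  have "hull_tgroup (F 0) G"
    unfolding hull_tgroup_def hull_eq
  proof (intro conjI allI)
    show "group G" by (rule grp)
    show "carrier G = range F" by (simp add: G_def)
    show "\<one>\<^bsub>G\<^esub> = F 0" by (simp add: G_def)
    show "continuous_on (?S \<times> ?S) (\<lambda>(x, y). x \<otimes>\<^bsub>G\<^esub> y)"
      using c3 by (simp add: G_def case_prod_beta)
    show "continuous_on ?S (\<lambda>x. inv\<^bsub>G\<^esub> x)"
      using inv_cont by (rule continuous_on_cong[THEN iffD2, rotated 2]) (simp_all add: invG)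
    fix j k
    show "zpow shift (j + k) (F 0) = zpow shift j (F 0) \<otimes>\<^bsub>G\<^esub> zpow shift k (F 0)"
      by (simp add: orb G_def gF z_add)
  qed
  then have ex: "\<exists>G. hull_tgroup (orbit_seq f T 0) G" unfolding d by blast
  have uniq: "\<exists>\<phi> :: (int \<Rightarrow>\<^sub>C real) \<Rightarrow> 'a. tgroup_iso_to G' \<phi>"
    if h: "hull_tgroup (orbit_seq f T 0) G'" for G'
  proof -
    have grp': "group G'" and car: "carrier G' = ?S"
      and mc: "continuous_on (?S \<times> ?S) (\<lambda>(x, y). x \<otimes>\<^bsub>G'\<^esub> y)"
      and hm: "\<And>j k. zpow shift (j + k) (F 0) = zpow shift j (F 0) \<otimes>\<^bsub>G'\<^esub> zpow shift k (F 0)"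
      using h unfolding hull_tgroup_def d hull_eq by auto
    have mcl: "x \<otimes>\<^bsub>G'\<^esub> y \<in> ?S" if "x \<in> ?S" "y \<in> ?S" for x y
      using monoid.m_closed[OF group.is_monoid[OF grp']] that car by simp
    have mc': "continuous_on (?S \<times> ?S) (\<lambda>p. fst p \<otimes>\<^bsub>G'\<^esub> snd p)"
      using mc by (simp add: case_prod_beta)
    have h1: "continuous_on (?S \<times> ?S) (\<lambda>p. g (fst p \<otimes>\<^bsub>G'\<^esub> snd p))"
      by (rule continuous_on_compose2[OF g_cont mc']) (auto intro: mcl)
    have Phi: "continuous_on (?S \<times> ?S) (\<lambda>p. (g (fst p \<otimes>\<^bsub>G'\<^esub> snd p), g (fst p) + g (snd p)))"
      by (rule continuous_on_Pair[OF h1 c2])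
    have "compact ?S" by (rule compact_continuous_image[OF F_cont cpt])
    then have clS: "closed ?S" by (rule compact_imp_closed)
    have clP: "closed (?S \<times> ?S)" by (rule closed_Times[OF clS clS])
    define E where "E = (?S \<times> ?S) \<inter> (\<lambda>p. (g (fst p \<otimes>\<^bsub>G'\<^esub> snd p), g (fst p) + g (snd p))) -` {y. \<exists>x::'a. y = (x, x)}"
    have clE: "closed E" unfolding E_def
      by (rule continuous_closed_preimage[OF Phi clP closed_diagonal])
    let ?O = "F ` range z"
    have OS: "?O \<subseteq> ?S" by auto
    have "?O \<times> ?O \<subseteq> E"
    proof clarify
      fix j k
      have "F (z j) \<otimes>\<^bsub>G'\<^esub> F (z k) = F (z (j + k))" using hm[of j k] by (simp add: orb)
      then show "(F (z j), F (z k)) \<in> E" by (simp add: E_def gF z_add)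
    qed
    then have "closure (?O \<times> ?O) \<subseteq> E" using clE by (rule closure_minimal)
    moreover have "closure ?O = ?S"
    proof -
      have "range (\<lambda>k. zpow shift k (F 0)) = ?O" using orb by auto
      then show ?thesis using hull_eq unfolding shift_hull_def by simp
    qed
    ultimately have PE: "?S \<times> ?S \<subseteq> E" by (simp add: closure_Times)
    show ?thesis
    proof (intro exI[of _ g])
      show "tgroup_iso_to G' g"
        unfolding tgroup_iso_to_def car
      proof (intro conjI ballI)
        show "\<exists>\<psi>. homeomorphism ?S UNIV g \<psi>" using homeomorphism_symD[OF hom] by blast
        fix x y assume "x \<in> ?S" "y \<in> ?S"
        then have "(x, y) \<in> E" using PE by blast
        then show "g (x \<otimes>\<^bsub>G'\<^esub> y) = g x + g y" by (simp add: E_def)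
      qed
    qed
  qed
  show ?thesis using f_cont ex uniq by blast
qed

end

theorem lemma4p3:
  fixes T :: "'a::{t2_space, ab_group_add} \<Rightarrow> 'a"
  assumes "cantor_group TYPE('a)"
    and "is_translation T"
    and "minimal_map T"
  shows "\<exists>f :: 'a \<Rightarrow> real. continuous_on UNIV f \<and>
           (\<exists>G. hull_tgroup (orbit_seq f T 0) G) \<and>
           (\<forall>G. hull_tgroup (orbit_seq f T 0) G \<longrightarrow>
                (\<exists>\<phi> :: (int \<Rightarrow>\<^sub>C real) \<Rightarrow> 'a. tgroup_iso_to G \<phi>))"
proof -
  obtain w0 where w0: "\<And>x. T x = x + w0" using assms(2) unfolding is_translation_def by blast
  interpret cg T w0
    using assms(1,3) w0 unfolding cantor_group_def by unfold_locales auto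
  show ?thesis by (rule main)
qed

end
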